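(* For all integers $m\ge 2$, $n\ge 2$, the state complexity of $L(M)^R\cup L(N)$, where $M$ ranges over complete DFAs with $m$ states and $N$ over complete DFAs with $n$ states (over a common alphabet), is exactly $2^m\cdot n-n+1$: for every such $M,N$ some DFA with at most $2^m\cdot n-n+1$ states accepts $L(M)^R\cup L(N)$, and there exist such $M,N$ for which the minimal complete DFA of $L(M)^R\cup L(N)$ has exactly $2^m\cdot n-n+1$ states.
   Context: DFAs are complete deterministic finite automata; $L(M)$ is the accepted language; $L^R=\{w^R: w\in L\}$ is the reversal of $L$. The state complexity of a regular language is the number of states of its minimal complete DFA; the state complexity of an operation is the maximum state complexity of its result over all argument DFAs of the given sizes. *)

theory Defs
  imports Main
begin

record ('q, 'a) dfa =
  states :: "'q set"
  alphabet :: "'a set"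
  init :: 'q
  trans :: "'q \<Rightarrow> 'a \<Rightarrow> 'q"
  final :: "'q set"

definition wf_dfa :: "('q, 'a) dfa \<Rightarrow> bool" where
  "wf_dfa M \<longleftrightarrow> finite (states M) \<and> finite (alphabet M) \<and>
     init M \<in> states M \<and> final M \<subseteq> states M \<and>
     (\<forall>q\<in>states M. \<forall>a\<in>alphabet M. trans M q a \<in> states M)"

definition delta_hat :: "('q, 'a) dfa \<Rightarrow> 'q \<Rightarrow> 'a list \<Rightarrow> 'q" where
  "delta_hat M q w = foldl (trans M) q w"

definition lang :: "('q, 'a) dfa \<Rightarrow> 'a list set" where
  "lang M = {w. set w \<subseteq> alphabet M \<and> delta_hat M (init M) w \<in> final M}"

definition rev_lang :: "'a list set \<Rightarrow> 'a list set" where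
  "rev_lang L = rev ` L"

text \<open>State complexity of L over alphabet Alph: number of states of a minimal
complete DFA over Alph accepting L (states taken w.l.o.g. as naturals).\<close>
definition sc :: "'a set \<Rightarrow> 'a list set \<Rightarrow> nat" where
  "sc Alph L = (LEAST k. \<exists>D :: (nat, 'a) dfa. wf_dfa D \<and> alphabet D = Alph \<and>
                     card (states D) = k \<and> lang D = L)"

end

theory Submission
  imports Defs
begin

lemma dh_Nil[simp]: "delta_hat M q [] = q"
  by (simp add: delta_hat_def)
lemma dh_Cons[simp]: "delta_hat M q (a#w) = delta_hat M (trans M q a) w"
  by (simp add: delta_hat_def)
lemma dh_append[simp]: "delta_hat M q (u@v) = delta_hat M (delta_hat M q u) v"
  by (simp add: delta_hat_def)

lemma dh_states: "wf_dfa M \<Longrightarrow> q \<in> states M \<Longrightarrow> set w \<subseteq> alphabet M \<Longrightarrow> delta_hat M q w \<in> states M"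
  by (induction w arbitrary: q) (auto simp: wf_dfa_def)

lemma rev_lang_iff: "x \<in> rev_lang X \<longleftrightarrow> rev x \<in> X"
  unfolding rev_lang_def by (metis image_iff rev_rev_ident)

lemma dfa_to_nat:
  assumes wf: "wf_dfa (D0 :: ('s,'a) dfa)"
  shows "\<exists>D :: (nat,'a) dfa. wf_dfa D \<and> alphabet D = alphabet D0 \<and> card (states D) = card (states D0) \<and> lang D = lang D0"
proof -
  let ?S = "states D0"
  have fin: "finite ?S" using wf by (simp add: wf_dfa_def)
  obtain f where bij: "bij_betw f ?S {0..<card ?S}" using ex_bij_betw_finite_nat[OF fin] by blast
  have inj: "inj_on f ?S" using bij by (simp add: bij_betw_def)
  define g where "g = inv_into ?S f"
  have gf: "g (f q) = q" if "q \<in> ?S" for q using inj that by (simp add: g_def)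
  define D where "D = \<lparr>states = f ` ?S, alphabet = alphabet D0, init = f (init D0),
     trans = (\<lambda>k a. f (trans D0 (g k) a)), final = f ` final D0\<rparr>"
  have step: "q \<in> ?S \<Longrightarrow> set w \<subseteq> alphabet D0 \<Longrightarrow> delta_hat D (f q) w = f (delta_hat D0 q w)" for q w
  proof (induction w arbitrary: q)
    case Nil then show ?case by simp
  next
    case (Cons a w)
    have "trans D0 q a \<in> ?S" using Cons.prems wf by (auto simp: wf_dfa_def)
    then show ?case using Cons by (simp add: D_def gf)
  qed
  have "wf_dfa D" using wf unfolding D_def wf_dfa_def by (auto simp: gf)
  moreover have "card (states D) = card ?S" using inj by (simp add: D_def card_image)
  moreover have "lang D = lang D0"
  proof (rule set_eqI)
    fix w
    show "w \<in> lang D \<longleftrightarrow> w \<in> lang D0"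
    proof (cases "set w \<subseteq> alphabet D0")
      case True
      have i: "init D0 \<in> ?S" and fs: "final D0 \<subseteq> ?S" using wf by (auto simp: wf_dfa_def)
      have dS: "delta_hat D0 (init D0) w \<in> ?S" using dh_states[OF wf i True] .
      have "delta_hat D (init D) w = f (delta_hat D0 (init D0) w)"
        using step[OF i True] by (simp add: D_def)
      moreover have "f (delta_hat D0 (init D0) w) \<in> f ` final D0 \<longleftrightarrow> delta_hat D0 (init D0) w \<in> final D0"
        using inj_on_image_mem_iff[OF inj dS fs] .
      ultimately show ?thesis using True by (simp add: lang_def D_def)
    next
      case False then show ?thesis by (simp add: lang_def D_def)
    qed
  qed
  moreover have "alphabet D = alphabet D0" by (simp add: D_def)
  ultimately show ?thesis by blast
qed

definition revS :: "('q,'a) dfa \<Rightarrow> 'q set \<Rightarrow> 'a \<Rightarrow> 'q set" where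
  "revS M S a = {p \<in> states M. trans M p a \<in> S}"

definition Sw :: "('q,'a) dfa \<Rightarrow> 'a list \<Rightarrow> 'q set" where
  "Sw M w = {p \<in> states M. delta_hat M p (rev w) \<in> final M}"

definition ubSt :: "('q,'a) dfa \<Rightarrow> ('p,'a) dfa \<Rightarrow> ('q set \<times> 'p) option set" where
  "ubSt M N = Some ` ((Pow (states M) - {states M}) \<times> states N) \<union> {None}"

definition ubD :: "('q,'a) dfa \<Rightarrow> ('p,'a) dfa \<Rightarrow> (('q set \<times> 'p) option, 'a) dfa" where
  "ubD M N = \<lparr> states = ubSt M N,
     alphabet = alphabet M,
     init = (if final M = states M then None else Some (final M, init N)),
     trans = (\<lambda>x a. case x of None \<Rightarrow> None | Some (S,q) \<Rightarrow>
        (if revS M S a = states M then None else Some (revS M S a, trans N q a))),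
     final = {x \<in> ubSt M N. case x of None \<Rightarrow> True | Some (S,q) \<Rightarrow> init M \<in> S \<or> q \<in> final N} \<rparr>"

lemma ubD_delta:
  assumes M: "wf_dfa M" and N: "wf_dfa N" and A: "alphabet N = alphabet M"
  shows "set w \<subseteq> alphabet M \<Longrightarrow> delta_hat (ubD M N) (init (ubD M N)) w =
     (if Sw M w = states M then None else Some (Sw M w, delta_hat N (init N) w))"
proof (induction w rule: rev_induct)
  case Nil
  have "Sw M [] = final M" using M by (auto simp: Sw_def wf_dfa_def)
  then show ?case by (simp add: ubD_def)
next
  case (snoc a w)
  have aA: "a \<in> alphabet M" and wA: "set w \<subseteq> alphabet M" using snoc.prems by auto
  note IH = snoc.IH[OF wA]
  have Sa: "Sw M (w@[a]) = revS M (Sw M w) a"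
    using M aA by (auto simp: Sw_def revS_def wf_dfa_def)
  show ?case
  proof (cases "Sw M w = states M")
    case True
    have "revS M (states M) a = states M" using M aA by (auto simp: revS_def wf_dfa_def)
    then show ?thesis using True IH Sa by (simp add: ubD_def)
  next
    case False
    then show ?thesis using IH Sa by (simp add: ubD_def)
  qed
qed

lemma ubD_lang:
  assumes M: "wf_dfa M" and N: "wf_dfa N" and A: "alphabet N = alphabet M"
  shows "lang (ubD M N) = rev_lang (lang M) \<union> lang N"
proof (rule set_eqI)
  fix w
  show "w \<in> lang (ubD M N) \<longleftrightarrow> w \<in> rev_lang (lang M) \<union> lang N"
  proof (cases "set w \<subseteq> alphabet M")
    case True
    note d = ubD_delta[OF M N A True]
    have iM: "init M \<in> states M" using M by (simp add: wf_dfa_def)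
    have SwQ: "Sw M w \<subseteq> states M" by (auto simp: Sw_def)
    have dN: "delta_hat N (init N) w \<in> states N"
      using dh_states[OF N] N True A by (simp add: wf_dfa_def)
    have iff: "init M \<in> Sw M w \<longleftrightarrow> rev w \<in> lang M"
      using True iM by (simp add: Sw_def lang_def)
    have "w \<in> lang (ubD M N) \<longleftrightarrow> init M \<in> Sw M w \<or> delta_hat N (init N) w \<in> final N"
    proof (cases "Sw M w = states M")
      case True2: True
      then show ?thesis using d True iM by (simp add: lang_def ubD_def ubSt_def)
    next
      case False
      then show ?thesis using d True SwQ dN by (simp add: lang_def ubD_def ubSt_def)
    qed
    then show ?thesis using iff True A by (simp add: rev_lang_iff lang_def)
  next
    case False
    then show ?thesis using A by (auto simp: lang_def ubD_def rev_lang_iff)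
  qed
qed

lemma ubD_wf:
  assumes M: "wf_dfa M" and N: "wf_dfa N" and A: "alphabet N = alphabet M"
  shows "wf_dfa (ubD M N)"
proof -
  have fin: "finite (ubSt M N)" using M N by (simp add: ubSt_def wf_dfa_def)
  have init: "init (ubD M N) \<in> ubSt M N" using M N by (auto simp: ubSt_def ubD_def wf_dfa_def)
  have tr: "\<forall>x\<in>ubSt M N. \<forall>a\<in>alphabet M. trans (ubD M N) x a \<in> ubSt M N"
    using N A by (auto simp: ubSt_def ubD_def wf_dfa_def revS_def)
  show ?thesis using fin init tr M by (auto simp: wf_dfa_def ubD_def)
qed

lemma ubD_card:
  assumes M: "wf_dfa M" and N: "wf_dfa N"
  shows "card (states (ubD M N)) = 2 ^ card (states M) * card (states N) - card (states N) + 1"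
proof -
  have fM: "finite (states M)" and fN: "finite (states N)" using M N by (auto simp: wf_dfa_def)
  have c1: "card (Pow (states M) - {states M}) = 2 ^ card (states M) - 1"
    using fM by (simp add: card_Pow)
  have "card ((Pow (states M) - {states M}) \<times> states N) = (2 ^ card (states M) - 1) * card (states N)"
    using c1 by (simp add: card_cartesian_product)
  then have "card (ubSt M N) = (2 ^ card (states M) - 1) * card (states N) + 1"
    using fM fN by (simp add: ubSt_def card_image)
  then show ?thesis by (simp add: ubD_def diff_mult_distrib)
qed

lemma upper:
  assumes M: "wf_dfa (M :: ('q,'a) dfa)" and N: "wf_dfa (N :: ('p,'a) dfa)" and A: "alphabet M = alphabet N"
  shows "\<exists>D :: (nat,'a) dfa. wf_dfa D \<and> alphabet D = alphabet M \<and>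
     card (states D) = 2 ^ card (states M) * card (states N) - card (states N) + 1 \<and>
     lang D = rev_lang (lang M) \<union> lang N"
  using dfa_to_nat[OF ubD_wf[OF M N A[symmetric]]] ubD_card[OF M N] ubD_lang[OF M N A[symmetric]]
  by (auto simp: ubD_def)


lemma mn_lower:
  assumes wf: "wf_dfa D" and L: "lang D = L"
    and WA: "\<forall>i\<in>I. set (W i) \<subseteq> alphabet D"
    and dist: "\<forall>i\<in>I. \<forall>j\<in>I. i \<noteq> j \<longrightarrow> (\<exists>v. set v \<subseteq> alphabet D \<and> \<not> (W i @ v \<in> L \<longleftrightarrow> W j @ v \<in> L))"
  shows "card I \<le> card (states D)"
proof -
  let ?f = "\<lambda>i. delta_hat D (init D) (W i)"
  have inj: "inj_on ?f I"
  proof (rule inj_onI)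
    fix i j assume i: "i \<in> I" and j: "j \<in> I" and eq: "?f i = ?f j"
    show "i = j"
    proof (rule ccontr)
      assume "i \<noteq> j"
      then obtain v where v: "set v \<subseteq> alphabet D" and nd: "\<not> (W i @ v \<in> L \<longleftrightarrow> W j @ v \<in> L)"
        using dist i j by blast
      have "W i @ v \<in> lang D \<longleftrightarrow> W j @ v \<in> lang D"
        using eq v WA i j by (simp add: lang_def)
      then show False using nd L by simp
    qed
  qed
  have "?f ` I \<subseteq> states D"
    using dh_states[OF wf] WA wf by (auto simp: wf_dfa_def)
  moreover have "finite (states D)" using wf by (simp add: wf_dfa_def)
  ultimately show ?thesis using card_inj_on_le[OF inj] by blast
qed

definition wM :: "nat \<Rightarrow> (nat,nat) dfa" where
  "wM m = \<lparr>states = {0..<m}, alphabet = {0..<2^m+2+m}, init = 0,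
     trans = (\<lambda>x a. if a < 2^m then (if bit a x then 0 else 1) else if a < 2^m + 2 then x else a - (2^m+2)),
     final = {0}\<rparr>"

definition wN :: "nat \<Rightarrow> nat \<Rightarrow> (nat,nat) dfa" where
  "wN m n = \<lparr>states = {0..<n}, alphabet = {0..<2^m+2+m}, init = 0,
     trans = (\<lambda>q a. if a = 2^m then min (q+1) (n-1) else if a = 2^m+1 then 0 else q),
     final = {n-1}\<rparr>"

lemma wM_wf: "m \<ge> 2 \<Longrightarrow> wf_dfa (wM m)"
  by (auto simp: wf_dfa_def wM_def)

lemma wN_wf: "n \<ge> 2 \<Longrightarrow> wf_dfa (wN m n)"
  by (auto simp: wf_dfa_def wN_def)

lemma rep_M: "delta_hat (wM m) x (replicate k (2^m)) = x"
  by (induction k) (auto simp: wM_def)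

lemma rep_N: "x \<le> n - 1 \<Longrightarrow> delta_hat (wN m n) x (replicate k (2^m)) = min (x+k) (n-1)"
proof (induction k arbitrary: x)
  case 0 then show ?case by simp
next
  case (Suc k)
  have "trans (wN m n) x (2^m) = min (x+1) (n-1)" by (simp add: wN_def)
  moreover have "min (min (x+1) (n-1) + k) (n-1) = min (x + Suc k) (n-1)" by (simp add: min_def)
  ultimately show ?case using Suc.IH[of "min (x+1) (n-1)"] by simp
qed

definition Wd :: "nat \<Rightarrow> nat \<times> nat \<Rightarrow> nat list" where
  "Wd m bq = replicate (snd bq) (2^m) @ [fst bq]"

lemma memL:
  assumes m: "m \<ge> 2" and n: "n \<ge> 2" and b: "b < 2^m" and q: "q < n"
    and v: "set v \<subseteq> {0..<2^m+2+m}"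
  shows "(Wd m (b,q) @ v \<in> rev_lang (lang (wM m)) \<union> lang (wN m n)) \<longleftrightarrow>
     bit b (delta_hat (wM m) 0 (rev v)) \<or> delta_hat (wN m n) q v = n - 1"
proof -
  have sW: "set (Wd m (b,q) @ v) \<subseteq> {0..<2^m+2+m}" using b v by (auto simp: Wd_def)
  have r: "rev (Wd m (b,q) @ v) = rev v @ [b] @ replicate q (2^m)" by (simp add: Wd_def)
  have dM: "delta_hat (wM m) 0 (rev (Wd m (b,q) @ v)) = (if bit b (delta_hat (wM m) 0 (rev v)) then 0 else 1)"
    unfolding r dh_append rep_M using b by (simp add: wM_def)
  have dN0: "delta_hat (wN m n) 0 (replicate q (2^m)) = q" using rep_N[of 0 n m q] q by simp
  have tb: "trans (wN m n) q b = q" using b by (simp add: wN_def)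
  have dN: "delta_hat (wN m n) 0 (Wd m (b,q) @ v) = delta_hat (wN m n) q v"
    by (simp add: Wd_def dN0 tb)
  show ?thesis using sW dM dN
    by (simp add: rev_lang_iff lang_def wM_def wN_def)
qed


lemma bit_diff:
  fixes b b' :: nat
  assumes "b < 2^m" "b' < 2^m" "b \<noteq> b'"
  shows "\<exists>p<m. bit b p \<noteq> bit b' p"
proof -
  obtain p where p: "bit b p \<noteq> bit b' p" using assms(3) bit_eq_iff by blast
  have "bit b p = (p < m \<and> bit b p)"
    using bit_take_bit_iff[of m b p] take_bit_nat_eq_self[OF assms(1)] by simp
  moreover have "bit b' p = (p < m \<and> bit b' p)"
    using bit_take_bit_iff[of m b' p] take_bit_nat_eq_self[OF assms(2)] by simp
  ultimately show ?thesis using p by metis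
qed

lemma bit_zero_exists:
  fixes b :: nat
  assumes "b < 2^m - 1"
  shows "\<exists>p<m. \<not> bit b p"
proof -
  have "(2::nat)^m > 0" by simp
  then obtain p where p: "p < m" "bit b p \<noteq> bit (2^m - 1 :: nat) p"
    using bit_diff[of b m "2^m - 1"] assms by force
  have "bit (mask m :: nat) p" using p(1) by (simp add: bit_mask_iff)
  then have "bit (2^m - 1 :: nat) p" by (simp add: mask_eq_exp_minus_1)
  then show ?thesis using p by blast
qed

lemma dist1:
  assumes m: "m \<ge> 2" and n: "n \<ge> 2" and b: "b < 2^m" and b': "b' < 2^m" and q: "q < n" and q': "q' < n"
    and p: "p < m" and bp: "bit b p \<noteq> bit b' p"
  shows "\<exists>v. set v \<subseteq> {0..<2^m+2+m} \<and> \<not> (Wd m (b,q) @ v \<in> rev_lang (lang (wM m)) \<union> lang (wN m n)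
     \<longleftrightarrow> Wd m (b',q') @ v \<in> rev_lang (lang (wM m)) \<union> lang (wN m n))"
proof -
  let ?v = "[2^m+1, 2^m+2+p]"
  have v: "set ?v \<subseteq> {0..<2^m+2+m}" using p by auto
  have dM: "delta_hat (wM m) 0 (rev ?v) = p" by (simp add: wM_def)
  have dN: "delta_hat (wN m n) x ?v = 0" for x by (simp add: wN_def)
  show ?thesis
    using memL[OF m n b q v] memL[OF m n b' q' v] dM dN n bp v by (intro exI[of _ ?v]) auto
qed

lemma dist2:
  assumes m: "m \<ge> 2" and n: "n \<ge> 2" and b: "b < 2^m" and qq: "q < q'" and q': "q' < n"
    and p: "p < m" and bp: "\<not> bit b p"
  shows "\<exists>v. set v \<subseteq> {0..<2^m+2+m} \<and> \<not> (Wd m (b,q) @ v \<in> rev_lang (lang (wM m)) \<union> lang (wN m n)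
     \<longleftrightarrow> Wd m (b,q') @ v \<in> rev_lang (lang (wM m)) \<union> lang (wN m n))"
proof -
  let ?k = "n - 1 - q'"
  let ?v = "replicate ?k (2^m) @ [2^m+2+p]"
  have q: "q < n" using qq q' by simp
  have v: "set ?v \<subseteq> {0..<2^m+2+m}" using p by auto
  have dM: "delta_hat (wM m) 0 (rev ?v) = p" by (simp add: rep_M) (simp add: wM_def)
  have dN: "delta_hat (wN m n) x ?v = min (x + ?k) (n-1)" if "x < n" for x
    using rep_N[of x n m ?k] that by (simp add: wN_def)
  have "min (q' + ?k) (n-1) = n - 1" using q' by simp
  moreover have "min (q + ?k) (n-1) \<noteq> n - 1" using qq q' by simp
  ultimately show ?thesis
    using memL[OF m n b q v] memL[OF m n b q' v] dM dN[OF q] dN[OF q'] bp v by (intro exI[of _ ?v]) auto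
qed

definition Iset :: "nat \<Rightarrow> nat \<Rightarrow> (nat \<times> nat) set" where
  "Iset m n = insert (2^m - 1, 0) ({0..<2^m - 1} \<times> {0..<n})"

lemma Iset_card: "card (Iset m n) = 2^m * n - n + 1"
  by (simp add: Iset_def card_cartesian_product diff_mult_distrib)

lemma lower:
  assumes m: "m \<ge> 2" and n: "n \<ge> 2" and wf: "wf_dfa (D :: (nat,nat) dfa)"
    and A: "alphabet D = {0..<2^m+2+m}" and L: "lang D = rev_lang (lang (wM m)) \<union> lang (wN m n)"
  shows "2^m * n - n + 1 \<le> card (states D)"
proof -
  have pos: "(2::nat)^m > 0" by simp
  have mem: "b < 2^m \<and> q < n" if "(b,q) \<in> Iset m n" for b q
    using that n pos by (auto simp: Iset_def)
  have WA: "\<forall>i\<in>Iset m n. set (Wd m i) \<subseteq> alphabet D"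
  proof
    fix i assume i: "i \<in> Iset m n"
    obtain b q where bq: "i = (b,q)" by fastforce
    have "b < 2^m" "q < n" using mem i bq by auto
    then show "set (Wd m i) \<subseteq> alphabet D" using A bq by (auto simp: Wd_def)
  qed
  have dist: "\<forall>i\<in>Iset m n. \<forall>j\<in>Iset m n. i \<noteq> j \<longrightarrow> (\<exists>v. set v \<subseteq> alphabet D \<and>
      \<not> (Wd m i @ v \<in> rev_lang (lang (wM m)) \<union> lang (wN m n) \<longleftrightarrow> Wd m j @ v \<in> rev_lang (lang (wM m)) \<union> lang (wN m n)))"
  proof (intro ballI impI)
    fix i j assume i: "i \<in> Iset m n" and j: "j \<in> Iset m n" and ij: "i \<noteq> j"
    obtain b q where bq: "i = (b,q)" by fastforce
    obtain b' q' where bq': "j = (b',q')" by fastforce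
    have B: "b < 2^m" "q < n" using mem i bq by auto
    have B': "b' < 2^m" "q' < n" using mem j bq' by auto
    show "\<exists>v. set v \<subseteq> alphabet D \<and>
      \<not> (Wd m i @ v \<in> rev_lang (lang (wM m)) \<union> lang (wN m n) \<longleftrightarrow> Wd m j @ v \<in> rev_lang (lang (wM m)) \<union> lang (wN m n))"
    proof (cases "b = b'")
      case False
      then obtain p where "p < m" "bit b p \<noteq> bit b' p" using bit_diff[OF B(1) B'(1)] by blast
      then show ?thesis using dist1[OF m n B(1) B'(1) B(2) B'(2)] bq bq' A by auto
    next
      case True
      then have qne: "q \<noteq> q'" using ij bq bq' by simp
      have "b < 2^m - 1" using i j bq bq' True qne by (auto simp: Iset_def)
      then obtain p where p: "p < m" "\<not> bit b p" using bit_zero_exists by blast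
      show ?thesis
      proof (cases "q < q'")
        case True
        then show ?thesis using dist2[OF m n B(1) True B'(2) p] bq bq' \<open>b = b'\<close> A by auto
      next
        case False
        then have "q' < q" using qne by simp
        then obtain v where "set v \<subseteq> {0..<2^m+2+m}" "\<not> (Wd m (b,q') @ v \<in> rev_lang (lang (wM m)) \<union> lang (wN m n)
     \<longleftrightarrow> Wd m (b,q) @ v \<in> rev_lang (lang (wM m)) \<union> lang (wN m n))"
          using dist2[OF m n B(1) _ B(2) p] by blast
        then show ?thesis using bq bq' \<open>b = b'\<close> A by blast
      qed
    qed
  qed
  show ?thesis using mn_lower[OF wf L WA dist] Iset_card by simp
qed

theorem theorem9:
  fixes m n :: nat
  assumes "m \<ge> 2" and "n \<ge> 2"
  shows "(\<forall>(M :: ('q, 'a) dfa) (N :: ('p, 'a) dfa).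
            wf_dfa M \<and> wf_dfa N \<and> alphabet M = alphabet N \<and>
            card (states M) = m \<and> card (states N) = n \<longrightarrow>
            (\<exists>D :: (nat, 'a) dfa. wf_dfa D \<and> alphabet D = alphabet M \<and>
               card (states D) \<le> 2 ^ m * n - n + 1 \<and>
               lang D = rev_lang (lang M) \<union> lang N))
       \<and> (\<exists>(M :: (nat, nat) dfa) (N :: (nat, nat) dfa).
            wf_dfa M \<and> wf_dfa N \<and> alphabet M = alphabet N \<and>
            card (states M) = m \<and> card (states N) = n \<and>
            sc (alphabet M) (rev_lang (lang M) \<union> lang N) = 2 ^ m * n - n + 1)"
proof (intro conjI allI impI)
  fix M :: "('q,'a) dfa" and N :: "('p,'a) dfa"
  assume h: "wf_dfa M \<and> wf_dfa N \<and> alphabet M = alphabet N \<and> card (states M) = m \<and> card (states N) = n"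
  then show "\<exists>D :: (nat, 'a) dfa. wf_dfa D \<and> alphabet D = alphabet M \<and>
               card (states D) \<le> 2 ^ m * n - n + 1 \<and> lang D = rev_lang (lang M) \<union> lang N"
    using upper[of M N] by fastforce
next
  have wfM: "wf_dfa (wM m)" using wM_wf assms(1) .
  have wfN: "wf_dfa (wN m n)" using wN_wf assms(2) .
  have AA: "alphabet (wM m) = alphabet (wN m n)" by (simp add: wM_def wN_def)
  have cM: "card (states (wM m)) = m" by (simp add: wM_def)
  have cN: "card (states (wN m n)) = n" by (simp add: wN_def)
  have Am: "alphabet (wM m) = {0..<2^m+2+m}" by (simp add: wM_def)
  obtain D :: "(nat,nat) dfa" where D: "wf_dfa D" "alphabet D = alphabet (wM m)"
      "card (states D) = 2 ^ m * n - n + 1" "lang D = rev_lang (lang (wM m)) \<union> lang (wN m n)"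
    using upper[OF wfM wfN AA] cM cN by auto
  have "sc (alphabet (wM m)) (rev_lang (lang (wM m)) \<union> lang (wN m n)) = 2 ^ m * n - n + 1"
    unfolding sc_def
  proof (rule Least_equality)
    show "\<exists>D :: (nat,nat) dfa. wf_dfa D \<and> alphabet D = alphabet (wM m) \<and>
       card (states D) = 2 ^ m * n - n + 1 \<and> lang D = rev_lang (lang (wM m)) \<union> lang (wN m n)"
      using D by blast
  next
    fix y
    assume "\<exists>D :: (nat,nat) dfa. wf_dfa D \<and> alphabet D = alphabet (wM m) \<and>
       card (states D) = y \<and> lang D = rev_lang (lang (wM m)) \<union> lang (wN m n)"
    then show "2 ^ m * n - n + 1 \<le> y" using lower[OF assms] Am by blast
  qed
  then show "\<exists>(M :: (nat, nat) dfa) (N :: (nat, nat) dfa).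
            wf_dfa M \<and> wf_dfa N \<and> alphabet M = alphabet N \<and>
            card (states M) = m \<and> card (states N) = n \<and>
            sc (alphabet M) (rev_lang (lang M) \<union> lang N) = 2 ^ m * n - n + 1"
    using wfM wfN AA cM cN by blast
qed

end
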